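(* Let $Q\in\mathbb{R}^{n\times n}$ be symmetric and doubly stochastic with eigenvalues $1=\lambda_1>\lambda_2\ge\cdots\ge\lambda_n>-1$. Let $\delta\in(0,1)$ and $\gamma\in(0,1/4)$, and let $\tau\in\mathbb{N}$ satisfy $$\tau\ge\left\lceil\frac{2}{\gamma(1-\lambda_2)}\max\left\{4\ln\Big(\frac{2}{\gamma(1-\lambda_2)}\Big),\ \gamma(1-\lambda_2)-\ln\frac{\sqrt{\delta}}{4}\right\}\right\rceil.$$ Then $\|\mathbf{J}_\gamma^\tau\|^2\le\delta<1$, where $\mathbf{J}_\gamma^\tau$ is the $\tau$-fold product of $\mathbf{J}_\gamma$ with itself and $$\mathbf{J}_\gamma=\begin{bmatrix}\bar{\mathbf{I}}_n-\gamma\mathbf{Q}' & 0 & -(\bar{\mathbf{I}}_n-\gamma\mathbf{Q}')\\ 0 & \bar{\mathbf{I}}_n-\gamma\mathbf{Q}' & -\bar{\mathbf{I}}_n\\ 0&0&\bar{\mathbf{I}}_n-\gamma\mathbf{Q}'\end{bmatrix}\in\mathbb{R}^{3nd\times 3nd}.$$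
   Context: $d\in\mathbb{N}$; $\bar{\mathbf{I}}_n=(I_n-\frac1n1_n1_n^T)\otimes I_d$ and $\mathbf{Q}'=(I_n-Q)\otimes I_d$, where $1_n$ is the all-ones vector and $\otimes$ the Kronecker product. $\|\cdot\|$ is the spectral ($\ell_2$ operator) norm and $\lceil\cdot\rceil$ the ceiling function. *)

theory Defs
  imports "HOL-Analysis.Analysis" "HOL-Computational_Algebra.Polynomial"
begin

definition charpoly :: "real^'n^'n \<Rightarrow> real poly" where
  "charpoly A = det (\<chi> i j. (if i = j then [:0, 1:] else 0) - [:A $ i $ j:])"

text \<open>Kronecker product; index (i,k) of A \<otimes> B corresponds to row i of A, row k of B.\<close>
definition kron :: "real^'n^'m \<Rightarrow> real^'q^'p \<Rightarrow> real^('n \<times> 'q)^('m \<times> 'p)" where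
  "kron A B = (\<chi> r c. A $ fst r $ fst c * B $ snd r $ snd c)"

definition matpow :: "real^'n^'n \<Rightarrow> nat \<Rightarrow> real^'n^'n" where
  "matpow A k = ((\<lambda>M. A ** M) ^^ k) (mat 1)"

definition doubly_stochastic :: "real^'n^'n \<Rightarrow> bool" where
  "doubly_stochastic Q \<longleftrightarrow> (\<forall>i j. Q $ i $ j \<ge> 0) \<and>
     (\<forall>i. (\<Sum>j\<in>UNIV. Q $ i $ j) = 1) \<and> (\<forall>j. (\<Sum>i\<in>UNIV. Q $ i $ j) = 1)"

definition Ibar :: "real^('n::finite \<times> 'd::finite)^('n \<times> 'd)" where
  "Ibar = kron ((mat 1 :: real^'n^'n) - (\<chi> i j. 1 / real CARD('n))) (mat 1 :: real^'d^'d)"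

definition Qprime :: "real^'n^'n \<Rightarrow> real^('n \<times> 'd::finite)^('n \<times> 'd)" where
  "Qprime Q = kron (mat 1 - Q) (mat 1 :: real^'d^'d)"

text \<open>The 3x3 block matrix J_gamma; block index 0,1,2 of the numeral type 3.\<close>
definition Jgamma :: "real^'n^'n \<Rightarrow> real \<Rightarrow> real^(3 \<times> ('n::finite \<times> 'd::finite))^(3 \<times> ('n \<times> 'd))" where
  "Jgamma Q \<gamma> = (let M = (Ibar :: real^('n \<times> 'd)^('n \<times> 'd)) - \<gamma> *\<^sub>R Qprime Q in
     (\<chi> r c. let a = fst r; x = snd r; b = fst c; y = snd c in
        if a = 0 \<and> b = 0 then M $ x $ y
        else if a = 0 \<and> b = 2 then - M $ x $ y
        else if a = 1 \<and> b = 1 then M $ x $ y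
        else if a = 1 \<and> b = 2 then - Ibar $ x $ y
        else if a = 2 \<and> b = 2 then M $ x $ y
        else 0))"

end

theory Submission
  imports Defs
begin

definition onev :: "real^'n" where "onev = (\<chi> i. 1)"

lemma Q_onev:
  assumes ds: "doubly_stochastic Q"
  shows "Q *v onev = onev"
  using ds unfolding doubly_stochastic_def onev_def
  by (simp add: matrix_vector_mult_def vec_eq_iff)

lemma onev_Q:
  assumes ds: "doubly_stochastic (Q::real^'n^'n)"
  shows "onev \<bullet> (Q *v x) = onev \<bullet> x"
proof -
  have "onev \<bullet> (Q *v x) = (\<Sum>i\<in>UNIV. \<Sum>j\<in>UNIV. Q$i$j * x$j)"
    by (simp add: onev_def inner_vec_def matrix_vector_mult_def)
  also have "\<dots> = (\<Sum>j\<in>UNIV. (\<Sum>i\<in>UNIV. Q$i$j) * x$j)"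
    by (subst sum.swap) (simp add: sum_distrib_right)
  also have "\<dots> = onev \<bullet> x" using ds unfolding doubly_stochastic_def
    by (simp add: onev_def inner_vec_def)
  finally show ?thesis .
qed

lemma Q_quad_lower:
  assumes ds: "doubly_stochastic (Q::real^'n^'n)"
  shows "- (x \<bullet> x) \<le> x \<bullet> (Q *v x)"
proof -
  have r: "\<And>i. (\<Sum>j\<in>UNIV. Q$i$j) = 1" and c: "\<And>j. (\<Sum>i\<in>UNIV. Q$i$j) = 1"
    and nn: "\<And>i j. Q$i$j \<ge> 0" using ds unfolding doubly_stochastic_def by auto
  have xx1: "x \<bullet> x = (\<Sum>i\<in>UNIV. \<Sum>j\<in>UNIV. Q$i$j * (x$i)^2)"
    by (simp add: inner_vec_def power2_eq_square sum_distrib_right[symmetric] r)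
  have xx2: "x \<bullet> x = (\<Sum>i\<in>UNIV. \<Sum>j\<in>UNIV. Q$i$j * (x$j)^2)"
    apply (subst sum.swap)
    by (simp add: inner_vec_def power2_eq_square sum_distrib_right[symmetric] c)
  have xq: "x \<bullet> (Q *v x) = (\<Sum>i\<in>UNIV. \<Sum>j\<in>UNIV. Q$i$j * (x$i * x$j))"
    by (simp add: inner_vec_def matrix_vector_mult_def sum_distrib_left algebra_simps)
  have "0 \<le> (\<Sum>i\<in>UNIV. \<Sum>j\<in>UNIV. Q$i$j * (x$i + x$j)^2)"
    by (intro sum_nonneg mult_nonneg_nonneg nn) auto
  also have "\<dots> = (\<Sum>i\<in>UNIV. \<Sum>j\<in>UNIV. Q$i$j * (x$i)^2) + (\<Sum>i\<in>UNIV. \<Sum>j\<in>UNIV. Q$i$j * (x$j)^2)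
      + 2 * (\<Sum>i\<in>UNIV. \<Sum>j\<in>UNIV. Q$i$j * (x$i * x$j))"
    by (simp add: sum.distrib sum_distrib_left power2_eq_square algebra_simps)
  finally show ?thesis using xx1 xx2 xq by linarith
qed

lemma sym_dot:
  assumes sym: "transpose Q = (Q::real^'n^'n)"
  shows "x \<bullet> (Q *v y) = y \<bullet> (Q *v x)"
proof -
  have "x \<bullet> (Q *v y) = (\<Sum>i\<in>UNIV. \<Sum>j\<in>UNIV. x$i * Q$i$j * y$j)"
    by (simp add: inner_vec_def matrix_vector_mult_def sum_distrib_left algebra_simps)
  also have "\<dots> = (\<Sum>j\<in>UNIV. \<Sum>i\<in>UNIV. x$i * Q$j$i * y$j)"
    apply (subst sum.swap)
    using sym by (metis (no_types, lifting) sum.cong transpose_def vec_lambda_beta)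
  also have "\<dots> = y \<bullet> (Q *v x)"
    by (simp add: inner_vec_def matrix_vector_mult_def sum_distrib_left algebra_simps)
  finally show ?thesis .
qed

lemma poly_charpoly:
  "poly (charpoly Q) \<mu> = det (mat \<mu> - (Q::real^'n^'n))"
  unfolding charpoly_def det_def
  by (auto simp add: poly_sum poly_prod mat_def intro!: sum.cong prod.cong)

definition pm :: "real^'m^'n \<Rightarrow> real poly^'m^'n" where
  "pm A = (\<chi> i j. [:A$i$j:])"

lemma pCons_sum: "[:sum f A:] = (\<Sum>x\<in>A. [:f x:])"
proof (induct A rule: infinite_finite_induct)
  case (insert x F)
  have "[:f x + sum f F:] = [:f x:] + [:sum f F:]" by simp
  then show ?case using insert by simp
qed auto

lemma pm_mult: "pm (A ** B) = pm A ** pm B"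
  by (simp add: pm_def matrix_matrix_mult_def vec_eq_iff pCons_sum mult.commute)

lemma pm_one: "pm (mat 1 :: real^'n^'n) = mat 1"
  by (simp add: pm_def mat_def vec_eq_iff)

lemma mat_mul_left: "mat x ** (A::'a::comm_ring_1^'m^'n) = (\<chi> i j. x * A$i$j)"
  unfolding matrix_matrix_mult_def mat_def
  by (auto simp: vec_eq_iff if_distrib if_distribR sum.delta cong: if_cong)

lemma mat_mul_right: "(A::'a::comm_ring_1^'m^'n) ** mat x = (\<chi> i j. A$i$j * x)"
  unfolding matrix_matrix_mult_def mat_def
  by (auto simp: vec_eq_iff if_distrib if_distribR sum.delta' cong: if_cong)

lemma matrix_diff_ldistrib: "(A::'a::comm_ring_1^'m^'n) ** (B - C) = A ** B - A ** C"
  by (simp add: matrix_matrix_mult_def vec_eq_iff sum_subtractf algebra_simps)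

lemma matrix_diff_rdistrib: "(B - C) ** (A::'a::comm_ring_1^'m^'n) = B ** A - C ** A"
  by (simp add: matrix_matrix_mult_def vec_eq_iff sum_subtractf algebra_simps)

lemma charpoly_mat: "charpoly Q = det (mat [:0,1:] - pm Q)"
  unfolding charpoly_def pm_def
  by (rule arg_cong[where f=det]) (simp add: vec_eq_iff mat_def)

lemma charpoly_similar:
  fixes Q P :: "real^'n^'n"
  assumes "P' ** P = mat 1"
  shows "charpoly (P' ** Q ** P) = charpoly Q"
proof -
  have "pm P' ** (mat [:0,1:] - pm Q) ** pm P = mat [:0,1:] - pm (P' ** Q ** P)"
  proof -
    have "pm P' ** mat [:0,1:] = mat [:0,1:] ** pm P'"
      by (simp add: mat_mul_left mat_mul_right mult.commute)
    then have "pm P' ** (mat [:0,1:] - pm Q) ** pm P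
        = mat [:0,1:] ** (pm P' ** pm P) - pm (P' ** Q ** P)"
      by (simp add: matrix_diff_ldistrib matrix_diff_rdistrib pm_mult matrix_mul_assoc)
    also have "\<dots> = mat [:0,1:] - pm (P' ** Q ** P)"
      using assms by (simp flip: pm_mult add: pm_one)
    finally show ?thesis .
  qed
  then have "charpoly (P' ** Q ** P) = det (pm P' ** (mat [:0,1:] - pm Q) ** pm P)"
    by (simp add: charpoly_mat)
  also have "\<dots> = det (mat [:0,1:] - pm Q) * (det (pm P') * det (pm P))"
    by (simp add: det_mul)
  also have "det (pm P') * det (pm P) = 1"
    using assms by (metis det_I det_mul pm_mult pm_one)
  finally show ?thesis by (simp add: charpoly_mat)
qed

lemma det_two_cols:
  fixes N :: "real poly^'n^'n"
  assumes ab: "a \<noteq> b"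
    and ca: "\<And>i. N$i$a = (if i = a then p else 0)"
    and cb: "\<And>i. N$i$b = (if i = b then p else 0)"
  shows "p^2 dvd det N"
proof -
  define T where "T = transpose N"
  have rowa: "T$a = p *s axis a 1"
    unfolding vec_eq_iff T_def transpose_def
    by (simp add: ca axis_def)
  have rowb: "T$b = p *s axis b 1"
    unfolding vec_eq_iff T_def transpose_def
    by (simp add: cb axis_def)
  have T: "T = (\<chi> i. if i = a then p *s axis a 1 else if i = b then p *s axis b 1 else T$i)"
    apply (subst vec_eq_iff)
    apply (intro allI)
    apply (subst vec_lambda_beta)
    using rowa rowb by auto
  have "det T = p * det (\<chi> i. if i = a then axis a 1 else if i = b then p *s axis b 1 else T$i)"
    by (subst T, rule det_row_mul)
  also have "(\<chi> i. if i = a then axis a 1 else if i = b then p *s axis b 1 else T$i)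
      = (\<chi> i. if i = b then p *s axis b 1 else if i = a then axis a 1 else T$i)"
    using ab by (auto simp: vec_eq_iff)
  also have "det \<dots> = p * det (\<chi> i. if i = b then axis b 1 else if i = a then axis a 1 else T$i)"
    by (rule det_row_mul)
  finally have "det N = p^2 * det (\<chi> i. if i = b then axis b 1 else if i = a then axis a (1::real poly) else T$i)"
    by (simp add: T_def power2_eq_square)
  then show ?thesis by simp
qed

lemma mm_entry: "(A ** B)$i$k = (\<Sum>j\<in>UNIV. A$i$j * B$j$k)"
  by (simp add: matrix_matrix_mult_def)

lemma double_root:
  fixes Q :: "real^'n^'n"
  assumes uv: "u \<bullet> v = 0" and u0: "u \<noteq> 0" and v0: "v \<noteq> 0"
    and Qu: "Q *v u = c *\<^sub>R u" and Qv: "Q *v v = c *\<^sub>R v"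
  shows "[:-c,1:]^2 dvd charpoly Q"
proof -
  have uvne: "u \<noteq> v" using uv u0 by auto
  have po: "pairwise orthogonal {u, v}"
    using uv by (simp add: pairwise_insert orthogonal_def inner_commute)
  have ind: "independent {u, v}"
    by (rule pairwise_orthogonal_independent[OF po]) (use u0 v0 in auto)
  obtain B where BS: "{u,v} \<subseteq> B" and Bi: "independent B" and Bsp: "UNIV \<subseteq> span B"
    by (rule maximal_independent_subset_extend[of "{u,v}" UNIV, OF _ ind]) auto
  have fB: "finite B" using Bi independent_bound by blast
  have "card B = dim (UNIV::(real^'n) set)"
    by (rule basis_card_eq_dim) (use Bi Bsp in auto)
  then have cB: "card B = CARD('n)" by simp
  obtain g where g: "bij_betw g (UNIV::'n set) B"
    using finite_same_card_bij[of "UNIV::'n set" B] fB cB by auto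
  define a where "a = inv_into UNIV g u"
  define b where "b = inv_into UNIV g v"
  have ga: "g a = u" unfolding a_def using g BS by (meson bij_betw_inv_into_right insert_subset)
  have gb: "g b = v" unfolding b_def using g BS by (meson bij_betw_inv_into_right insert_subset)
  have ab: "a \<noteq> b" using ga gb uvne by auto
  define P :: "real^'n^'n" where "P = (\<chi> i j. g j $ i)"
  have colP: "\<And>j. column j P = g j" by (simp add: P_def column_def vec_eq_iff)
  have "\<exists>P'. P' ** P = mat 1"
    unfolding matrix_left_invertible_independent_columns
  proof (intro allI impI)
    fix cc :: "'n \<Rightarrow> real" and i
    assume h: "(\<Sum>i\<in>UNIV. cc i *s column i P) = 0"
    define d where "d = (\<lambda>w. cc (inv_into UNIV g w))"
    have "(\<Sum>w\<in>B. d w *\<^sub>R w) = (\<Sum>i\<in>UNIV. d (g i) *\<^sub>R g i)"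
      using sum.reindex_bij_betw[OF g, of "\<lambda>w. d w *\<^sub>R w"] by simp
    also have "\<dots> = (\<Sum>i\<in>UNIV. cc i *s column i P)"
      using g by (simp add: d_def colP scalar_mult_eq_scaleR bij_betw_inv_into_left)
    finally have "(\<Sum>w\<in>B. d w *\<^sub>R w) = 0" using h by simp
    then have "\<forall>w\<in>B. d w = 0" using Bi unfolding independent_explicit by auto
    then have "d (g i) = 0" using g bij_betwE by blast
    then show "cc i = 0" using g by (simp add: d_def bij_betw_inv_into_left)
  qed
  then obtain P' where P': "P' ** P = mat 1" by blast
  define B' where "B' = P' ** Q ** P"
  have colB: "B'$i$k = (if i = k then c else 0)" if "g k = w" "Q *v w = c *\<^sub>R w" for i k w
  proof -
    have "(Q ** P)$j$k = c * P$j$k" for j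
    proof -
      have "(Q ** P)$j$k = (Q *v w)$j"
        using that(1) by (simp add: matrix_matrix_mult_def matrix_vector_mult_def P_def)
      also have "\<dots> = c * P$j$k" using that by (simp add: P_def)
      finally show ?thesis .
    qed
    then have "(P' ** (Q ** P))$i$k = (\<Sum>j\<in>UNIV. P'$i$j * (c * P$j$k))"
      by (simp only: mm_entry[of P' "Q ** P"])
    also have "\<dots> = c * (P' ** P)$i$k"
      by (simp add: mm_entry sum_distrib_left mult.left_commute)
    finally have "B'$i$k = c * (P' ** P)$i$k"
      by (simp add: B'_def matrix_mul_assoc)
    then show ?thesis using P' by (simp add: mat_def)
  qed
  have "[:-c,1:]^2 dvd det (mat [:0,1:] - pm B')"
  proof (rule det_two_cols[OF ab])
    fix i
    show "(mat [:0,1:] - pm B')$i$a = (if i = a then [:-c,1:] else 0)"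
      using colB[OF ga Qu, of i] by (simp add: pm_def mat_def)
    show "(mat [:0,1:] - pm B')$i$b = (if i = b then [:-c,1:] else 0)"
      using colB[OF gb Qv, of i] by (simp add: pm_def mat_def)
  qed
  also have "det (mat [:0,1:] - pm B') = charpoly Q"
    using charpoly_similar[OF P', of Q] by (simp add: B'_def charpoly_mat)
  finally show ?thesis .
qed

lemma mv_scaleR: "(Q::real^'n^'m) *v (t *\<^sub>R z) = t *\<^sub>R (Q *v z)"
  by (simp add: vec_eq_iff matrix_vector_mult_def sum_distrib_left algebra_simps)

lemma det_zero_if_kernel:
  fixes A :: "real^'n^'n"
  assumes "A *v x = 0" "x \<noteq> 0"
  shows "det A = 0"
proof (rule ccontr)
  assume "det A \<noteq> 0"
  then have "invertible A" by (simp add: invertible_det_nz)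
  then obtain B where "B ** A = mat 1" unfolding invertible_left_inverse by blast
  then have "x = B *v (A *v x)" by (simp add: matrix_vector_mul_assoc)
  then show False using assms by simp
qed

lemma quad_zero:
  fixes b c :: real
  assumes "\<And>t. 2 * t * b + t^2 * c \<le> 0"
  shows "b = 0"
proof -
  define k where "k = \<bar>c\<bar> + 1"
  have k: "k > 0" "2 * k + c \<ge> 2" unfolding k_def by auto
  define s where "s = b / k"
  have bs: "b = s * k" using k by (simp add: s_def)
  have "2 * s * b + s^2 * c \<le> 0" by (rule assms)
  moreover have "2 * s * b + s^2 * c = s^2 * (2 * k + c)"
    by (simp add: bs power2_eq_square algebra_simps)
  ultimately have le: "s^2 * (2 * k + c) \<le> 0" by simp
  have "s^2 * (2 * k + c) \<ge> 0" using k by (intro mult_nonneg_nonneg) auto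
  with le have "s^2 * (2 * k + c) = 0" by linarith
  then have "s = 0" using k by simp
  then show ?thesis using bs by simp
qed

lemma mat_diff_mv: "(mat m - (A::real^'n^'n)) *v x = m *\<^sub>R x - A *v x"
proof -
  have "mat m *v x = m *\<^sub>R x"
  proof -
    have "\<And>i j. (if i = j then m else 0) * x$j = (if j = i then m * x$i else 0)" by auto
    then show ?thesis by (simp add: vec_eq_iff matrix_vector_mult_def mat_def)
  qed
  then show ?thesis by (simp add: matrix_vector_mult_diff_rdistrib)
qed

lemma rayleigh:
  fixes Q :: "real^'n^'n" and lam :: "nat \<Rightarrow> real"
  assumes n2: "CARD('n) \<ge> 2"
    and sym: "transpose Q = Q"
    and ds: "doubly_stochastic Q"
    and eig: "charpoly Q = (\<Prod>i<CARD('n). [:- lam i, 1:])"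
    and l1: "lam 0 = 1" and l12: "lam 0 > lam 1"
    and lsorted: "\<And>i j. 1 \<le> i \<Longrightarrow> i \<le> j \<Longrightarrow> j < CARD('n) \<Longrightarrow> lam j \<le> lam i"
    and u: "u \<bullet> onev = 0"
  shows "u \<bullet> (Q *v u) \<le> lam 1 * (u \<bullet> u)"
proof -
  define f where "f = (\<lambda>u. u \<bullet> (Q *v u))"
  define S where "S = sphere (0::real^'n) 1 \<inter> {x. onev \<bullet> x = 0}"
  have cS: "compact S" unfolding S_def
    by (intro compact_Int_closed compact_sphere closed_hyperplane)
  obtain a b :: 'n where ab: "a \<noteq> b"
  proof -
    have "\<not> card (UNIV::'n set) \<le> Suc 0" using n2 by simp
    then show ?thesis using that card_le_Suc0_iff_eq[of "UNIV::'n set"] by auto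
  qed
  define w :: "real^'n" where "w = axis a 1 - axis b 1"
  have w0: "w \<noteq> 0" using ab unfolding w_def by (auto simp: vec_eq_iff axis_def)
  have wo: "onev \<bullet> w = 0" using ab
    by (simp add: w_def onev_def inner_diff_right inner_axis)
  have "w /\<^sub>R norm w \<in> S" using w0 wo by (simp add: S_def inner_scaleR_right)
  then have Sne: "S \<noteq> {}" by auto
  have cf: "continuous_on S f" unfolding f_def by (intro continuous_intros)
  obtain x where xS: "x \<in> S" and xmax: "\<And>y. y \<in> S \<Longrightarrow> f y \<le> f x"
    using continuous_attains_sup[OF cS Sne cf] by blast
  define \<mu> where "\<mu> = f x"
  have xn: "x \<bullet> x = 1" and xo: "onev \<bullet> x = 0" using xS
    by (auto simp: S_def inner_commute dot_square_norm)
  have x0: "x \<noteq> 0" using xn by auto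
  have bound: "f y \<le> \<mu> * (y \<bullet> y)" if "onev \<bullet> y = 0" for y
  proof (cases "y = 0")
    case True then show ?thesis by (simp add: f_def)
  next
    case False
    have "y /\<^sub>R norm y \<in> S" using False that by (simp add: S_def inner_scaleR_right)
    then have "f (y /\<^sub>R norm y) \<le> \<mu>" using xmax \<mu>_def by blast
    moreover have "f (y /\<^sub>R norm y) = f y / (norm y)^2"
      by (simp add: f_def mv_scaleR inner_scaleR_left inner_scaleR_right power2_eq_square field_simps)
    moreover have "(norm y)^2 = y \<bullet> y" by (simp add: dot_square_norm)
    moreover have "norm y > 0" using False by simp
    ultimately show ?thesis by (simp add: field_simps)
  qed
  define r where "r = Q *v x - \<mu> *\<^sub>R x"
  have rz: "z \<bullet> r = 0" if zo: "onev \<bullet> z = 0" for z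
  proof -
    have "2 * t * (z \<bullet> r) + t^2 * (f z - \<mu> * (z \<bullet> z)) \<le> 0" for t
    proof -
      have "onev \<bullet> (x + t *\<^sub>R z) = 0" using xo zo by (simp add: inner_add_right)
      then have "f (x + t *\<^sub>R z) \<le> \<mu> * ((x + t *\<^sub>R z) \<bullet> (x + t *\<^sub>R z))" by (rule bound)
      moreover have "f (x + t *\<^sub>R z) = \<mu> + 2 * t * (z \<bullet> (Q *v x)) + t^2 * f z"
      proof -
        have sd: "x \<bullet> (Q *v z) = z \<bullet> (Q *v x)" by (rule sym_dot[OF sym])
        have "f (x + t *\<^sub>R z) = x \<bullet> (Q *v x) + t * (x \<bullet> (Q *v z)) + t * (z \<bullet> (Q *v x)) + t * t * (z \<bullet> (Q *v z))"
          by (simp add: f_def matrix_vector_right_distrib mv_scaleR inner_add_left inner_add_right algebra_simps)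
        then show ?thesis by (simp add: sd f_def \<mu>_def power2_eq_square algebra_simps)
      qed
      moreover have "(x + t *\<^sub>R z) \<bullet> (x + t *\<^sub>R z) = x \<bullet> x + 2 * t * (z \<bullet> x) + t^2 * (z \<bullet> z)"
        by (simp add: inner_add_left inner_add_right inner_commute[of x z] power2_eq_square algebra_simps)
      moreover have "2*t*(z \<bullet> r) + t^2*(f z - \<mu>*(z \<bullet> z)) = (\<mu> + 2*t*(z \<bullet> (Q *v x)) + t^2*f z) - \<mu>*(1 + 2*t*(z \<bullet> x) + t^2*(z \<bullet> z))"
        by (simp add: r_def inner_diff_right algebra_simps)
      ultimately show ?thesis using xn by simp
    qed
    then show ?thesis by (rule quad_zero)
  qed
  have "onev \<bullet> r = 0" using onev_Q[OF ds, of x] xo by (simp add: r_def inner_diff_right)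
  then have "r \<bullet> r = 0" by (rule rz)
  then have Qx: "Q *v x = \<mu> *\<^sub>R x" by (simp add: r_def)
  have "(mat \<mu> - Q) *v x = 0"
    using Qx by (simp add: mat_diff_mv)
  then have "det (mat \<mu> - Q) = 0" using x0 by (rule det_zero_if_kernel)
  then have "poly (charpoly Q) \<mu> = 0" by (simp add: poly_charpoly)
  then have "(\<Prod>i<CARD('n). \<mu> - lam i) = 0" by (simp add: eig poly_prod)
  then obtain i where i: "i < CARD('n)" "\<mu> = lam i" by auto
  have "\<mu> \<le> lam 1"
  proof (cases "i = 0")
    case False then show ?thesis using lsorted[of 1 i] i by auto
  next
    case True
    have "[:-1,1:]^2 dvd charpoly Q"
    proof (rule double_root[of onev x])
      show "onev \<bullet> x = 0" by (rule xo)
      show "onev \<noteq> (0::real^'n)" by (simp add: onev_def vec_eq_iff)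
      show "x \<noteq> 0" by (rule x0)
      show "Q *v onev = 1 *\<^sub>R onev" using Q_onev[OF ds] by simp
      show "Q *v x = 1 *\<^sub>R x" using Qx True i l1 by simp
    qed
    define R where "R = (\<Prod>i\<in>{1..<CARD('n)}. [:- lam i, 1:])"
    have "{..<CARD('n)} = insert 0 {1..<CARD('n)}" using n2 by auto
    then have "charpoly Q = [:-1,1:] * R" by (simp add: eig R_def l1)
    then have "[:-1,1:] * [:-1,1:] dvd [:-1,1:] * R"
      using \<open>[:-1,1:]^2 dvd charpoly Q\<close> by (simp add: power2_eq_square)
    then have "[:-1,1:] dvd R" by (subst (asm) dvd_mult_cancel_left) auto
    then have "poly R 1 = 0" by (simp add: poly_eq_0_iff_dvd)
    moreover have "poly R 1 > 0"
      unfolding R_def poly_prod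
    proof (rule prod_pos)
      fix j assume "j \<in> {1..<CARD('n)}"
      then have "lam j \<le> lam 1" using lsorted[of 1 j] by auto
      then show "0 < poly [:- lam j, 1:] 1" using l12 l1 by simp
    qed
    ultimately show ?thesis by simp
  qed
  have "u \<bullet> (Q *v u) \<le> \<mu> * (u \<bullet> u)" using bound[of u] u by (simp add: f_def inner_commute)
  also have "\<dots> \<le> lam 1 * (u \<bullet> u)" using \<open>\<mu> \<le> lam 1\<close> by (simp add: mult_right_mono)
  finally show ?thesis .
qed

definition Cm :: "real^'n^'n" where "Cm = mat 1 - (\<chi> i j. 1 / real CARD('n))"

lemma onev_dot_onev: "onev \<bullet> (onev::real^'n) = real CARD('n)"
  by (simp add: onev_def inner_vec_def)

lemma Cm_mv: "Cm *v (y::real^'n) = y - ((onev \<bullet> y) / real CARD('n)) *\<^sub>R onev"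
proof -
  have "(\<chi> i j. 1 / real CARD('n)) *v y = ((onev \<bullet> y) / real CARD('n)) *\<^sub>R (onev::real^'n)"
    by (simp add: vec_eq_iff matrix_vector_mult_def onev_def inner_vec_def sum_divide_distrib)
  then show ?thesis by (simp add: Cm_def matrix_vector_mult_diff_rdistrib)
qed

lemma Cm_orth: "onev \<bullet> (Cm *v (y::real^'n)) = 0"
  by (simp add: Cm_mv inner_diff_right onev_dot_onev)

lemma Cm_id: "onev \<bullet> y = 0 \<Longrightarrow> Cm *v y = (y::real^'n)"
  by (simp add: Cm_mv)

lemma Cm_norm: "norm (Cm *v y) \<le> norm (y::real^'n)"
proof -
  define m where "m = (onev \<bullet> y) / real CARD('n)"
  have y: "y = Cm *v y + m *\<^sub>R onev" by (simp add: Cm_mv m_def)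
  have "y \<bullet> y = (Cm *v y) \<bullet> (Cm *v y) + m^2 * (onev \<bullet> (onev::real^'n))"
    apply (subst (1 2) y)
    using Cm_orth[of y]
    by (simp add: inner_add_left inner_add_right inner_commute power2_eq_square)
  moreover have "onev \<bullet> (onev::real^'n) \<ge> 0" by simp
  ultimately have "(Cm *v y) \<bullet> (Cm *v y) \<le> y \<bullet> y" by (smt (verit) zero_le_power2 mult_nonneg_nonneg)
  then show ?thesis by (simp add: norm_eq_sqrt_inner)
qed

lemma psd_bound:
  fixes Q :: "real^'n^'n" and lam :: "nat \<Rightarrow> real"
  assumes n2: "CARD('n) \<ge> 2"
    and sym: "transpose Q = Q"
    and ds: "doubly_stochastic Q"
    and eig: "charpoly Q = (\<Prod>i<CARD('n). [:- lam i, 1:])"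
    and l1: "lam 0 = 1" and l12: "lam 0 > lam 1"
    and lsorted: "\<And>i j. 1 \<le> i \<Longrightarrow> i \<le> j \<Longrightarrow> j < CARD('n) \<Longrightarrow> lam j \<le> lam i"
    and g: "0 < \<gamma>" "\<gamma> \<le> 1/2"
    and y: "onev \<bullet> y = 0"
  shows "norm ((1 - \<gamma>) *\<^sub>R y + \<gamma> *\<^sub>R (Q *v y)) \<le> (1 - \<gamma> * (1 - lam 1)) * norm y"
proof -
  define \<rho> where "\<rho> = 1 - \<gamma> * (1 - lam 1)"
  define B where "B = (\<lambda>u. (1 - \<gamma>) *\<^sub>R u + \<gamma> *\<^sub>R (Q *v u))"
  define \<beta> where "\<beta> = (\<lambda>u v. u \<bullet> B v)"
  have Bo: "onev \<bullet> B u = 0" if "onev \<bullet> u = 0" for u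
    using that onev_Q[OF ds, of u] by (simp add: B_def inner_add_right)
  have Badd: "B (u - s *\<^sub>R v) = B u - s *\<^sub>R B v" for u v s
    by (simp add: B_def matrix_vector_mult_diff_distrib mv_scaleR algebra_simps)
  have bsym: "\<beta> u v = \<beta> v u" for u v
    using sym_dot[OF sym, of u v] by (simp add: \<beta>_def B_def inner_add_right inner_commute)
  have qq: "\<beta> u u = (1 - \<gamma>) * (u \<bullet> u) + \<gamma> * (u \<bullet> (Q *v u))" for u
    by (simp add: \<beta>_def B_def inner_add_right)
  have up: "\<beta> u u \<le> \<rho> * (u \<bullet> u)" if uo: "onev \<bullet> u = 0" for u :: "real^'n"
  proof -
    have uo': "u \<bullet> onev = 0" using uo by (simp add: inner_commute)
    have "u \<bullet> (Q *v u) \<le> lam 1 * (u \<bullet> u)"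
      apply (rule rayleigh[OF n2 sym ds eig l1 l12])
      using lsorted uo' by auto
    then have "\<gamma> * (u \<bullet> (Q *v u)) \<le> \<gamma> * (lam 1 * (u \<bullet> u))" using g by simp
    then show ?thesis by (simp add: qq \<rho>_def algebra_simps)
  qed
  have lo: "\<beta> u u \<ge> 0" for u
  proof -
    have "- (u \<bullet> u) \<le> u \<bullet> (Q *v u)" by (rule Q_quad_lower[OF ds])
    then have "\<gamma> * (- (u \<bullet> u)) \<le> \<gamma> * (u \<bullet> (Q *v u))" using g by (intro mult_left_mono) auto
    moreover have "(1 - 2 * \<gamma>) * (u \<bullet> u) \<ge> 0" using g by simp
    ultimately show ?thesis by (simp add: qq algebra_simps)
  qed
  define z where "z = B y"
  have zo: "onev \<bullet> z = 0" using Bo[OF y] by (simp add: z_def)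
  have zz: "z \<bullet> z = \<beta> z y" by (simp add: \<beta>_def z_def)
  have key: "2 * s * (z \<bullet> z) \<le> \<rho> * (z \<bullet> z + s^2 * (y \<bullet> y))" for s
  proof -
    have "0 \<le> \<beta> (z - s *\<^sub>R y) (z - s *\<^sub>R y)" by (rule lo)
    also have "\<dots> = \<beta> z z - s * \<beta> z y - s * \<beta> y z + s^2 * \<beta> y y"
      unfolding \<beta>_def Badd by (simp add: inner_diff_left inner_diff_right inner_scaleR_left inner_scaleR_right power2_eq_square algebra_simps)
    also have "\<dots> = \<beta> z z - 2 * s * \<beta> z y + s^2 * \<beta> y y"
      using bsym[of y z] by simp
    finally have "2 * s * \<beta> z y \<le> \<beta> z z + s^2 * \<beta> y y" by simp
    also have "\<dots> \<le> \<rho> * (z \<bullet> z) + s^2 * (\<rho> * (y \<bullet> y))"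
      using up[OF zo] up[OF y] by (intro add_mono mult_left_mono) auto
    finally show ?thesis using zz by (simp add: algebra_simps)
  qed
  have "norm z \<le> \<rho> * norm y"
  proof (cases "y = 0")
    case True then show ?thesis by (simp add: z_def B_def)
  next
    case False
    then have ny: "norm y > 0" by simp
    show ?thesis
    proof (cases "z = 0")
      case True
      have "0 \<le> \<rho> * (y \<bullet> y)" using up[OF y] lo[of y] by linarith
      moreover have "y \<bullet> y > 0" using \<open>y \<noteq> 0\<close> by simp
      ultimately have "\<rho> \<ge> 0"
        using mult_neg_pos[of \<rho> "y \<bullet> y"] by linarith
      then show ?thesis using True ny by simp
    next
      case False
      then have nz: "norm z > 0" by simp
      have "2 * (norm z / norm y) * (norm z)^2 \<le> \<rho> * ((norm z)^2 + (norm z / norm y)^2 * (norm y)^2)"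
        using key[of "norm z / norm y"] by (simp add: dot_square_norm)
      also have "(norm z / norm y)^2 * (norm y)^2 = (norm z)^2" using ny by (simp add: field_simps)
      finally have "2 * (norm z / norm y) * (norm z)^2 \<le> 2 * \<rho> * (norm z)^2" by simp
      then have "(norm z / norm y) * (2 * (norm z)^2) \<le> \<rho> * (2 * (norm z)^2)"
        by (simp add: mult_ac)
      moreover have "0 < 2 * (norm z)^2" using nz by simp
      ultimately have "norm z / norm y \<le> \<rho>" by (rule mult_right_le_imp_le)
      then show ?thesis using ny by (simp add: field_simps)
    qed
  qed
  then show ?thesis by (simp add: z_def B_def \<rho>_def)
qed

definition slice :: "'d::finite \<Rightarrow> real^('n \<times> 'd) \<Rightarrow> real^'n" where
  "slice k v = (\<chi> i. v$(i,k))"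

lemma sum_prod_UNIV: "(\<Sum>p\<in>(UNIV::('a::finite \<times> 'b::finite) set). f p) = (\<Sum>j\<in>UNIV. \<Sum>l\<in>UNIV. f (j,l))"
  by (simp add: sum.cartesian_product)

lemma sum_prod_UNIV': "(\<Sum>p\<in>(UNIV::('a::finite \<times> 'b::finite) set). f p) = (\<Sum>l\<in>UNIV. \<Sum>j\<in>UNIV. f (j,l))"
  unfolding sum_prod_UNIV by (rule sum.swap)

lemma slice_kron: "slice k (kron K (mat 1 :: real^'d^'d) *v v) = (K::real^'n^'n) *v slice k v"
proof -
  have "\<And>i j l. K$i$j * (mat 1 :: real^'d^'d)$k$l * v$(j,l) = (if l = k then K$i$j * v$(j,k) else 0)"
    by (auto simp: mat_def)
  then show ?thesis
    by (simp add: slice_def vec_eq_iff matrix_vector_mult_def kron_def sum_prod_UNIV)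
qed

lemma slice_eq: "(\<And>k. slice k v = slice k w) \<Longrightarrow> v = w"
  by (auto simp: slice_def vec_eq_iff)

lemma inner_slices: "(v::real^('n::finite \<times> 'd::finite)) \<bullet> w = (\<Sum>k\<in>UNIV. slice k v \<bullet> slice k w)"
  by (simp add: inner_vec_def slice_def sum_prod_UNIV')

lemma kron_bound:
  assumes K: "\<And>y. norm ((K::real^'n^'n) *v y) \<le> c * norm y" and c: "0 \<le> c"
  shows "norm (kron K (mat 1 :: real^'d^'d) *v v) \<le> c * norm v"
proof -
  let ?w = "kron K (mat 1 :: real^'d^'d) *v v"
  have "(norm ?w)^2 = (\<Sum>k\<in>UNIV. (norm (K *v slice k v))^2)"
    by (simp add: power2_norm_eq_inner inner_slices[of ?w] slice_kron)
  also have "\<dots> \<le> (\<Sum>k\<in>UNIV. (c * norm (slice k v))^2)"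
    using K c by (intro sum_mono power_mono) auto
  also have "\<dots> = c^2 * (norm v)^2"
    by (simp add: power_mult_distrib sum_distrib_left power2_norm_eq_inner inner_slices[of v])
  also have "\<dots> = (c * norm v)^2" by (simp add: power_mult_distrib)
  finally have "(norm ?w)^2 \<le> (c * norm v)^2" .
  then show ?thesis using c by (rule power2_le_imp_le[OF _ mult_nonneg_nonneg]) simp
qed

lemma kron_diff: "kron (A - c *\<^sub>R B) (mat 1 :: real^'d^'d) = kron A (mat 1) - c *\<^sub>R kron (B::real^'n^'n) (mat 1)"
  by (simp add: kron_def vec_eq_iff algebra_simps)

definition A0 :: "real^'n^'n \<Rightarrow> real \<Rightarrow> real^'n^'n" where
  "A0 Q \<gamma> = Cm - \<gamma> *\<^sub>R (mat 1 - Q)"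

lemma M_kron: "(Ibar :: real^('n::finite \<times> 'd::finite)^('n \<times> 'd)) - \<gamma> *\<^sub>R Qprime Q = kron (A0 Q \<gamma>) (mat 1 :: real^'d^'d)"
  by (simp add: Ibar_def Qprime_def A0_def Cm_def kron_diff)

lemma Ibar_kron: "(Ibar :: real^('n::finite \<times> 'd::finite)^('n \<times> 'd)) = kron Cm (mat 1 :: real^'d^'d)"
  by (simp add: Ibar_def Cm_def)

lemma scaleR_mv: "(c *\<^sub>R (A::real^'n^'m)) *v y = c *\<^sub>R (A *v y)"
  by (simp add: vec_eq_iff matrix_vector_mult_def sum_distrib_left algebra_simps)

lemma A0_mv:
  assumes ds: "doubly_stochastic Q"
  shows "A0 Q \<gamma> *v y = (1 - \<gamma>) *\<^sub>R (Cm *v y) + \<gamma> *\<^sub>R (Q *v (Cm *v (y::real^'n)))"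
proof -
  define m where "m = (onev \<bullet> y) / real CARD('n)"
  have Cy: "Cm *v y = y - m *\<^sub>R onev" by (simp add: Cm_mv m_def)
  have QC: "Q *v (Cm *v y) = Q *v y - m *\<^sub>R onev"
    using Q_onev[OF ds] by (simp add: Cy matrix_vector_mult_diff_distrib mv_scaleR)
  show ?thesis
    using Q_onev[OF ds]
    by (simp add: A0_def QC matrix_vector_mult_diff_rdistrib Cy scaleR_mv algebra_simps)
qed

lemma A0_orth:
  assumes ds: "doubly_stochastic Q"
  shows "onev \<bullet> (A0 Q \<gamma> *v y) = 0"
  using onev_Q[OF ds, of "Cm *v y"] Cm_orth[of y]
  by (simp add: A0_mv[OF ds] inner_add_right)

lemma Cm_A0: assumes ds: "doubly_stochastic Q" shows "Cm *v (A0 Q \<gamma> *v y) = A0 Q \<gamma> *v y"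
  by (rule Cm_id[OF A0_orth[OF ds]])

lemma A0_Cm: assumes ds: "doubly_stochastic Q" shows "A0 Q \<gamma> *v (Cm *v y) = A0 Q \<gamma> *v y"
  by (simp add: A0_mv[OF ds] Cm_id[OF Cm_orth])

lemma Ibar_norm: "norm ((Ibar :: real^('n::finite \<times> 'd::finite)^('n \<times> 'd)) *v v) \<le> norm v"
proof -
  have "\<And>y. norm (Cm *v y) \<le> 1 * norm (y::real^'n)" using Cm_norm by simp
  from kron_bound[OF this, of v] show ?thesis unfolding Ibar_kron by simp
qed

lemma M_norm:
  fixes Q :: "real^'n^'n" and lam :: "nat \<Rightarrow> real"
  assumes n2: "CARD('n) \<ge> 2"
    and sym: "transpose Q = Q"
    and ds: "doubly_stochastic Q"
    and eig: "charpoly Q = (\<Prod>i<CARD('n). [:- lam i, 1:])"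
    and l1: "lam 0 = 1" and l12: "lam 0 > lam 1"
    and lsorted: "\<And>i j. 1 \<le> i \<Longrightarrow> i \<le> j \<Longrightarrow> j < CARD('n) \<Longrightarrow> lam j \<le> lam i"
    and g: "0 < \<gamma>" "\<gamma> \<le> 1/2" and lm: "lam 1 \<ge> -1"
  shows "norm (((Ibar :: real^('n \<times> 'd::finite)^('n \<times> 'd)) - \<gamma> *\<^sub>R Qprime Q) *v v)
          \<le> (1 - \<gamma> * (1 - lam 1)) * norm v"
proof -
  have r0: "0 \<le> 1 - \<gamma> * (1 - lam 1)"
  proof -
    have "\<gamma> * (1 - lam 1) \<le> (1/2) * 2" using g lm l1 l12 by (intro mult_mono) auto
    then show ?thesis by simp
  qed
  have "norm (A0 Q \<gamma> *v y) \<le> (1 - \<gamma> * (1 - lam 1)) * norm y" for y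
  proof -
    have "norm (A0 Q \<gamma> *v y) \<le> (1 - \<gamma> * (1 - lam 1)) * norm (Cm *v y)"
      unfolding A0_mv[OF ds]
      apply (rule psd_bound[OF n2 sym ds eig l1 l12 _ g])
      using lsorted Cm_orth by auto
    also have "\<dots> \<le> (1 - \<gamma> * (1 - lam 1)) * norm y"
      using r0 Cm_norm by (rule mult_left_mono[rotated])
    finally show ?thesis .
  qed
  then show ?thesis unfolding M_kron using r0 by (rule kron_bound)
qed

lemma kron_comp:
  "kron A (mat 1 :: real^'d^'d) *v (kron B (mat 1 :: real^'d^'d) *v v) = kron C (mat 1 :: real^'d::finite^'d) *v v"
  if "\<And>y. (A::real^'n^'n) *v ((B::real^'n^'n) *v y) = (C::real^'n::finite^'n) *v y"
  by (rule slice_eq) (simp add: slice_kron that)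

lemma Ibar_M:
  assumes ds: "doubly_stochastic Q"
  shows "(Ibar :: real^('n::finite \<times> 'd::finite)^('n \<times> 'd)) *v ((Ibar - \<gamma> *\<^sub>R Qprime Q) *v v)
         = (Ibar - \<gamma> *\<^sub>R Qprime Q) *v v"
  unfolding M_kron unfolding Ibar_kron by (rule kron_comp) (rule Cm_A0[OF ds])

lemma M_Ibar:
  assumes ds: "doubly_stochastic Q"
  shows "((Ibar :: real^('n::finite \<times> 'd::finite)^('n \<times> 'd)) - \<gamma> *\<^sub>R Qprime Q) *v (Ibar *v v)
         = (Ibar - \<gamma> *\<^sub>R Qprime Q) *v v"
  unfolding M_kron unfolding Ibar_kron by (rule kron_comp) (rule A0_Cm[OF ds])

lemma three_eq_0: "(3::3) = 0" by simp

lemma sum_UNIV_3: "sum f (UNIV::3 set) = f 0 + f 1 + f 2"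
  using sum_3[of f] by (simp add: three_eq_0 ac_simps)

definition blk :: "3 \<Rightarrow> real^(3 \<times> 'x::finite) \<Rightarrow> real^'x" where
  "blk a w = (\<chi> x. w$(a,x))"

lemma blk_eq: "(\<And>a. blk a v = blk a w) \<Longrightarrow> v = w"
  by (auto simp: blk_def vec_eq_iff)

lemma inner_blk: "(v::real^(3 \<times> 'x::finite)) \<bullet> v = blk 0 v \<bullet> blk 0 v + blk 1 v \<bullet> blk 1 v + blk 2 v \<bullet> blk 2 v"
  by (simp add: inner_vec_def blk_def sum_prod_UNIV sum_UNIV_3)

lemma mv_entry: "(A *v v)$i = (\<Sum>j\<in>UNIV. A$i$j * v$j)"
  by (simp add: matrix_vector_mult_def)

lemma J_entry:
  "(Jgamma Q \<gamma> :: real^(3 \<times> ('n::finite \<times> 'd::finite))^(3 \<times> ('n \<times> 'd)))$(a,x)$(b,y) =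
    (if a = 0 \<and> b = 0 then ((Ibar :: real^('n \<times> 'd)^('n \<times> 'd)) - \<gamma> *\<^sub>R Qprime Q)$x$y
     else if a = 0 \<and> b = 2 then - ((Ibar :: real^('n \<times> 'd)^('n \<times> 'd)) - \<gamma> *\<^sub>R Qprime Q)$x$y
     else if a = 1 \<and> b = 1 then ((Ibar :: real^('n \<times> 'd)^('n \<times> 'd)) - \<gamma> *\<^sub>R Qprime Q)$x$y
     else if a = 1 \<and> b = 2 then - (Ibar :: real^('n \<times> 'd)^('n \<times> 'd))$x$y
     else if a = 2 \<and> b = 2 then ((Ibar :: real^('n \<times> 'd)^('n \<times> 'd)) - \<gamma> *\<^sub>R Qprime Q)$x$y
     else 0)"
  by (simp add: Jgamma_def Let_def)

lemma J_blocks: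
  fixes Q :: "real^'n::finite^'n" and w :: "real^(3 \<times> ('n \<times> 'd::finite))" and \<gamma> :: real
  defines "M \<equiv> (Ibar :: real^('n \<times> 'd)^('n \<times> 'd)) - \<gamma> *\<^sub>R Qprime Q"
  shows "blk 0 (Jgamma Q \<gamma> *v w) = M *v blk 0 w - M *v blk 2 w"
    and "blk 1 (Jgamma Q \<gamma> *v w) = M *v blk 1 w - Ibar *v blk 2 w"
    and "blk 2 (Jgamma Q \<gamma> *v w) = M *v blk 2 w"
proof -
  have e: "(Jgamma Q \<gamma> *v w)$(a,x) =
     (\<Sum>y\<in>UNIV. (Jgamma Q \<gamma> :: real^(3 \<times> ('n \<times> 'd))^(3 \<times> ('n \<times> 'd)))$(a,x)$(0,y) * w$(0,y))
   + (\<Sum>y\<in>UNIV. (Jgamma Q \<gamma> :: real^(3 \<times> ('n \<times> 'd))^(3 \<times> ('n \<times> 'd)))$(a,x)$(1,y) * w$(1,y))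
   + (\<Sum>y\<in>UNIV. (Jgamma Q \<gamma> :: real^(3 \<times> ('n \<times> 'd))^(3 \<times> ('n \<times> 'd)))$(a,x)$(2,y) * w$(2,y))" for a x
    unfolding mv_entry sum_prod_UNIV sum_UNIV_3 by simp
  show "blk 0 (Jgamma Q \<gamma> *v w) = M *v blk 0 w - M *v blk 2 w"
    unfolding vec_eq_iff blk_def vec_lambda_beta e J_entry
    by (simp add: M_def[symmetric] mv_entry sum_subtractf sum_negf)
  show "blk 1 (Jgamma Q \<gamma> *v w) = M *v blk 1 w - Ibar *v blk 2 w"
    unfolding vec_eq_iff blk_def vec_lambda_beta e J_entry
    by (simp add: M_def[symmetric] mv_entry sum_subtractf sum_negf)
  show "blk 2 (Jgamma Q \<gamma> *v w) = M *v blk 2 w"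
    unfolding vec_eq_iff blk_def vec_lambda_beta e J_entry
    by (simp add: M_def[symmetric] mv_entry sum_subtractf sum_negf)
qed

lemma matpow_mv: "matpow A k *v w = ((\<lambda>v. A *v v) ^^ k) w"
proof (induct k)
  case 0 then show ?case by (simp add: matpow_def)
next
  case (Suc k)
  have "matpow A (Suc k) = A ** matpow A k" by (simp add: matpow_def)
  then show ?case using Suc by (simp flip: matrix_vector_mul_assoc)
qed

lemma pow_norm:
  fixes M :: "real^'n^'n" and v :: "real^'n"
  assumes "\<And>v. norm (M *v v) \<le> \<rho> * norm v" "0 \<le> \<rho>"
  shows "norm (((\<lambda>v. M *v v) ^^ j) v) \<le> \<rho>^j * norm v"
proof (induct j)
  case 0 show ?case by simp
next
  case (Suc j)
  have "norm (((\<lambda>v. M *v v) ^^ Suc j) v) \<le> \<rho> * norm (((\<lambda>v. M *v v) ^^ j) v)"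
    using assms(1) by simp
  also have "\<dots> \<le> \<rho> * (\<rho>^j * norm v)" using Suc assms(2) by (rule mult_left_mono)
  finally show ?case by (simp add: mult.assoc)
qed

lemma mv_lin: "(M::real^'n^'m) *v (a - c *\<^sub>R b) = M *v a - c *\<^sub>R (M *v b)"
  by (simp add: matrix_vector_mult_diff_distrib mv_scaleR)

lemma J_iter:
  fixes Q :: "real^'n::finite^'n" and w :: "real^(3 \<times> ('n \<times> 'd::finite))" and \<gamma> :: real
  assumes ds: "doubly_stochastic Q"
  defines "M \<equiv> (Ibar :: real^('n \<times> 'd)^('n \<times> 'd)) - \<gamma> *\<^sub>R Qprime Q"
  defines "Mf \<equiv> (\<lambda>v. M *v v)" and "Jf \<equiv> (\<lambda>v. Jgamma Q \<gamma> *v v)"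
  shows "blk 0 ((Jf ^^ Suc k) w) = (Mf ^^ Suc k) (blk 0 w) - real (Suc k) *\<^sub>R (Mf ^^ Suc k) (blk 2 w)
       \<and> blk 1 ((Jf ^^ Suc k) w) = (Mf ^^ Suc k) (blk 1 w) - real (Suc k) *\<^sub>R (Mf ^^ k) (Ibar *v blk 2 w)
       \<and> blk 2 ((Jf ^^ Suc k) w) = (Mf ^^ Suc k) (blk 2 w)"
proof (induct k)
  case 0
  then show ?case using J_blocks[of Q \<gamma> w] by (simp add: Jf_def Mf_def M_def)
next
  case (Suc k)
  define w' where "w' = (Jf ^^ Suc k) w"
  have JS: "(Jf ^^ Suc (Suc k)) w = Jgamma Q \<gamma> *v w'" by (simp add: w'_def Jf_def)
  have IM: "Ibar *v ((Mf ^^ Suc k) v) = (Mf ^^ Suc k) v" for v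
    using Ibar_M[OF ds, of \<gamma> "(Mf ^^ k) v"] by (simp add: Mf_def M_def)
  have MI: "(Mf ^^ Suc k) (Ibar *v v) = (Mf ^^ Suc k) v" for v
  proof -
    have "(Mf ^^ Suc k) (Ibar *v v) = (Mf ^^ k) (Mf (Ibar *v v))" by (simp add: funpow_Suc_right del: funpow.simps)
    also have "Mf (Ibar *v v) = Mf v" using M_Ibar[OF ds, of \<gamma> v] by (simp add: Mf_def M_def)
    also have "(Mf ^^ k) (Mf v) = (Mf ^^ Suc k) v" by (simp add: funpow_Suc_right del: funpow.simps)
    finally show ?thesis .
  qed
  have b0: "blk 0 w' = (Mf ^^ Suc k) (blk 0 w) - real (Suc k) *\<^sub>R (Mf ^^ Suc k) (blk 2 w)"
    and b1: "blk 1 w' = (Mf ^^ Suc k) (blk 1 w) - real (Suc k) *\<^sub>R (Mf ^^ k) (Ibar *v blk 2 w)"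
    and b2: "blk 2 w' = (Mf ^^ Suc k) (blk 2 w)"
    using Suc by (simp_all add: w'_def)
  have "blk 0 ((Jf ^^ Suc (Suc k)) w) = M *v blk 0 w' - M *v blk 2 w'"
    unfolding JS M_def by (rule J_blocks)
  also have "\<dots> = (Mf ^^ Suc (Suc k)) (blk 0 w) - real (Suc k) *\<^sub>R (Mf ^^ Suc (Suc k)) (blk 2 w)
        - (Mf ^^ Suc (Suc k)) (blk 2 w)"
    by (simp add: b0 b2 mv_lin Mf_def)
  also have "\<dots> = (Mf ^^ Suc (Suc k)) (blk 0 w) - real (Suc (Suc k)) *\<^sub>R (Mf ^^ Suc (Suc k)) (blk 2 w)"
    by (simp only: of_nat_Suc[of "Suc k"] scaleR_left_distrib diff_diff_eq scaleR_one add.commute)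
  finally have c0: "blk 0 ((Jf ^^ Suc (Suc k)) w) = \<dots>" .
  have "blk 1 ((Jf ^^ Suc (Suc k)) w) = M *v blk 1 w' - Ibar *v blk 2 w'"
    unfolding JS M_def by (rule J_blocks)
  also have "\<dots> = (Mf ^^ Suc (Suc k)) (blk 1 w) - real (Suc k) *\<^sub>R (Mf ^^ Suc k) (Ibar *v blk 2 w)
       - (Mf ^^ Suc k) (Ibar *v blk 2 w)"
    using IM[of "blk 2 w"] MI[of "blk 2 w"] by (simp add: b1 b2 mv_lin Mf_def)
  also have "\<dots> = (Mf ^^ Suc (Suc k)) (blk 1 w) - real (Suc (Suc k)) *\<^sub>R (Mf ^^ Suc k) (Ibar *v blk 2 w)"
    by (simp only: of_nat_Suc[of "Suc k"] scaleR_left_distrib diff_diff_eq scaleR_one add.commute)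
  finally have c1: "blk 1 ((Jf ^^ Suc (Suc k)) w) = \<dots>" .
  have "blk 2 ((Jf ^^ Suc (Suc k)) w) = M *v blk 2 w'"
    unfolding JS M_def by (rule J_blocks)
  also have "\<dots> = (Mf ^^ Suc (Suc k)) (blk 2 w)" by (simp add: b2 Mf_def)
  finally have c2: "blk 2 ((Jf ^^ Suc (Suc k)) w) = \<dots>" .
  show ?case using c0 c1 c2 by blast
qed

lemma poly_ineq:
  fixes x y z T :: real
  assumes "0 \<le> T"
  shows "(x + T*y)^2 + (z + T*y)^2 + y^2 \<le> (3 + 2*T^2) * (x^2 + y^2 + z^2)"
proof -
  have a: "2*T*x*y \<le> T^2*x^2 + y^2"
  proof -
    have "0 \<le> (T*x - y)^2" by simp
    then show ?thesis by (simp add: power2_diff power_mult_distrib mult.assoc)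
  qed
  have b: "2*T*z*y \<le> T^2*z^2 + y^2"
  proof -
    have "0 \<le> (T*z - y)^2" by simp
    then show ?thesis by (simp add: power2_diff power_mult_distrib mult.assoc)
  qed
  have "(x + T*y)^2 + (z + T*y)^2 + y^2 = x^2 + 2*T*x*y + T^2*y^2 + z^2 + 2*T*z*y + T^2*y^2 + y^2"
    by (simp add: power2_eq_square algebra_simps)
  also have "\<dots> \<le> x^2 + (T^2*x^2 + y^2) + T^2*y^2 + z^2 + (T^2*z^2 + y^2) + T^2*y^2 + y^2"
    using a b by linarith
  also have "\<dots> \<le> (3 + 2*T^2) * (x^2 + y^2 + z^2)"
    using zero_le_power2[of x] zero_le_power2[of z] zero_le_power2[of T]
      mult_nonneg_nonneg[of "T^2" "x^2"] mult_nonneg_nonneg[of "T^2" "z^2"]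
    by (simp add: algebra_simps)
  finally show ?thesis .
qed

lemma norm_diff_scale: "0 \<le> (T::real) \<Longrightarrow> norm (a - T *\<^sub>R b) \<le> norm a + T * norm b"
  using norm_triangle_ineq4[of a "T *\<^sub>R b"] by simp

lemma J_bound:
  fixes Q :: "real^'n::finite^'n" and w :: "real^(3 \<times> ('n \<times> 'd::finite))" and \<gamma> :: real
  assumes ds: "doubly_stochastic Q"
    and Mn: "\<And>v. norm (((Ibar :: real^('n \<times> 'd)^('n \<times> 'd)) - \<gamma> *\<^sub>R Qprime Q) *v v) \<le> \<rho> * norm v"
    and r0: "0 \<le> \<rho>" and r1: "\<rho> \<le> 1"
  shows "(norm (matpow (Jgamma Q \<gamma>) (Suc k) *v w))^2 \<le> (3 + 2 * (real (Suc k))^2) * (\<rho>^k)^2 * (norm w)^2"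
proof -
  define M where "M = (Ibar :: real^('n \<times> 'd)^('n \<times> 'd)) - \<gamma> *\<^sub>R Qprime Q"
  define Mf where "Mf = (\<lambda>v. M *v v)"
  define Jf where "Jf = (\<lambda>v::real^(3 \<times> ('n \<times> 'd)). Jgamma Q \<gamma> *v v)"
  define T where "T = real (Suc k)"
  define p where "p = \<rho>^k"
  define u where "u = (Jf ^^ Suc k) w"
  have u: "matpow (Jgamma Q \<gamma>) (Suc k) *v w = u" by (simp add: u_def Jf_def matpow_mv)
  have it: "blk 0 u = (Mf ^^ Suc k) (blk 0 w) - T *\<^sub>R (Mf ^^ Suc k) (blk 2 w)"
      "blk 1 u = (Mf ^^ Suc k) (blk 1 w) - T *\<^sub>R (Mf ^^ k) (Ibar *v blk 2 w)"
      "blk 2 u = (Mf ^^ Suc k) (blk 2 w)"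
    using J_iter[OF ds, where \<gamma>=\<gamma> and k=k and w=w] by (simp_all add: u_def T_def Mf_def M_def Jf_def)
  have pn: "norm ((Mf ^^ j) v) \<le> \<rho>^j * norm v" for j v
    unfolding Mf_def by (rule pow_norm) (use Mn r0 in \<open>simp_all add: M_def\<close>)
  have p0: "0 \<le> p" using r0 by (simp add: p_def)
  have pS: "\<rho>^Suc k \<le> p" using r0 r1 by (simp add: p_def mult_left_le_one_le)
  have T0: "0 \<le> T" by (simp add: T_def)
  define x where "x = norm (blk 0 w)"
  define y where "y = norm (blk 2 w)"
  define z where "z = norm (blk 1 w)"
  have "norm (blk 0 u) \<le> norm ((Mf ^^ Suc k) (blk 0 w)) + T * norm ((Mf ^^ Suc k) (blk 2 w))"
    unfolding it by (rule norm_diff_scale[OF T0])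
  also have "\<dots> \<le> p * x + T * (p * y)"
  proof -
    have h0: "norm ((Mf ^^ Suc k) (blk 0 w)) \<le> p * x"
      unfolding x_def by (rule order_trans[OF pn mult_right_mono[OF pS]]) simp
    have h2: "norm ((Mf ^^ Suc k) (blk 2 w)) \<le> p * y"
      unfolding y_def by (rule order_trans[OF pn mult_right_mono[OF pS]]) simp
    show ?thesis by (rule add_mono[OF h0 mult_left_mono[OF h2 T0]])
  qed
  finally have n0: "norm (blk 0 u) \<le> p * (x + T * y)" by (simp add: algebra_simps)
  have "norm (blk 1 u) \<le> norm ((Mf ^^ Suc k) (blk 1 w)) + T * norm ((Mf ^^ k) (Ibar *v blk 2 w))"
    unfolding it by (rule norm_diff_scale[OF T0])
  also have "\<dots> \<le> p * z + T * (p * y)"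
  proof -
    have "norm ((Mf ^^ k) (Ibar *v blk 2 w)) \<le> p * norm (Ibar *v blk 2 w)"
      using pn by (simp add: p_def)
    also have "\<dots> \<le> p * y" unfolding y_def using p0 Ibar_norm by (rule mult_left_mono[rotated])
    finally have h: "norm ((Mf ^^ k) (Ibar *v blk 2 w)) \<le> p * y" .
    have h1: "norm ((Mf ^^ Suc k) (blk 1 w)) \<le> p * z"
      unfolding z_def by (rule order_trans[OF pn mult_right_mono[OF pS]]) simp
    show ?thesis by (rule add_mono[OF h1 mult_left_mono[OF h T0]])
  qed
  finally have n1: "norm (blk 1 u) \<le> p * (z + T * y)" by (simp add: algebra_simps)
  have n2: "norm (blk 2 u) \<le> p * y"
    unfolding it y_def by (rule order_trans[OF pn mult_right_mono[OF pS]]) simp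
  have "(norm u)^2 = (norm (blk 0 u))^2 + (norm (blk 1 u))^2 + (norm (blk 2 u))^2"
    by (simp add: power2_norm_eq_inner inner_blk[of u])
  also have "\<dots> \<le> (p * (x + T * y))^2 + (p * (z + T * y))^2 + (p * y)^2"
    by (intro add_mono power_mono n0 n1 n2) simp_all
  also have "\<dots> = p^2 * ((x + T*y)^2 + (z + T*y)^2 + y^2)" by (simp add: power2_eq_square algebra_simps)
  also have "\<dots> \<le> p^2 * ((3 + 2*T^2) * (x^2 + y^2 + z^2))"
    by (rule mult_left_mono[OF poly_ineq[OF T0]]) simp
  also have "x^2 + y^2 + z^2 = (norm w)^2"
    by (simp add: x_def y_def z_def power2_norm_eq_inner inner_blk[of w])
  finally show ?thesis by (simp add: u T_def p_def algebra_simps)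
qed

lemma ln_le_half: "0 < (X::real) \<Longrightarrow> ln X \<le> X / 2"
proof -
  assume X: "0 < X"
  have s: "sqrt X > 0" using X by simp
  have "ln X = 2 * ln (sqrt X)" using X by (simp add: ln_sqrt)
  also have "\<dots> \<le> 2 * (sqrt X - 1)" using ln_le_minus_one[OF s] by simp
  also have "\<dots> \<le> X / 2"
  proof -
    have "0 \<le> (sqrt X - 2)^2" by simp
    also have "(sqrt X - 2)^2 = X - 4 * sqrt X + 4" using X by (simp add: power2_diff)
    finally show ?thesis by simp
  qed
  finally show ?thesis .
qed

lemma numeric:
  fixes a \<delta> :: real and \<tau> :: nat
  assumes a: "0 < a" "a < 1/2" and \<delta>: "0 < \<delta>" "\<delta> < 1"
    and \<tau>: "real \<tau> \<ge> of_int \<lceil>2 / a * max (4 * ln (2 / a)) (a - ln (sqrt \<delta> / 4))\<rceil>"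
  shows "\<tau> \<ge> 2 \<and> (3 + 2 * (real \<tau>)^2) * ((1 - a)^(\<tau> - 1))^2 \<le> \<delta>"
proof -
  define L where "L = ln (2 / a)"
  have t: "real \<tau> \<ge> 2 / a * max (4 * L) (a - ln (sqrt \<delta> / 4))"
    using \<tau> le_of_int_ceiling unfolding L_def by (rule order_trans[rotated])
  have a2: "2 / a > 0" using a by simp
  have t1: "real \<tau> \<ge> 2 / a * (4 * L)"
    using t mult_left_mono[OF max.cobounded1 less_imp_le[OF a2]] by (rule order_trans[rotated])
  have t2: "real \<tau> \<ge> 2 / a * (a - ln (sqrt \<delta> / 4))"
    using t mult_left_mono[OF max.cobounded2 less_imp_le[OF a2]] by (rule order_trans[rotated])
  have four: "2 / a > 4" using a by (simp add: field_simps)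
  have ln4: "ln (4::real) \<ge> 1"
  proof -
    have "exp 1 \<le> (4::real)" using exp_le by simp
    then have "ln (exp 1) \<le> ln (4::real)" by (subst ln_le_cancel_iff) auto
    then show ?thesis by simp
  qed
  have "ln 4 \<le> ln (2 / a)" using four a by (subst ln_le_cancel_iff) auto
  then have L1: "L \<ge> 1" unfolding L_def using ln4 by linarith
  define X where "X = a * real \<tau> / 2"
  have tX: "real \<tau> = 2 * X / a" using a by (simp add: X_def)
  have X4: "X \<ge> 4 * L"
  proof -
    have "a * real \<tau> \<ge> a * (2 / a * (4 * L))" by (rule mult_left_mono[OF t1]) (use a in auto)
    then show ?thesis using a by (simp add: X_def field_simps)
  qed
  have X0: "X > 0" using X4 L1 by linarith
  have tau2: "real \<tau> \<ge> 2"
  proof -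
    have "2 / a * (4 * L) \<ge> 4 * 4" by (rule mult_mono) (use four L1 a in auto)
    then show ?thesis using t1 by linarith
  qed
  then have tau_ge: "\<tau> \<ge> 2" by simp
  have Xa: "X - a \<ge> ln 4 - ln (sqrt \<delta>)"
  proof -
    have "a * real \<tau> \<ge> a * (2 / a * (a - ln (sqrt \<delta> / 4)))" by (rule mult_left_mono[OF t2]) (use a in auto)
    moreover have "a * (2 / a * (a - ln (sqrt \<delta> / 4))) = 2 * (a - ln (sqrt \<delta> / 4))"
      using a by simp
    ultimately have "X \<ge> a - ln (sqrt \<delta> / 4)" by (simp add: X_def)
    moreover have "ln (sqrt \<delta> / 4) = ln (sqrt \<delta>) - ln 4" using \<delta> by (simp add: ln_div)
    ultimately show ?thesis by linarith
  qed
  have ln2t: "ln (2 * real \<tau>) \<le> X + ln 4"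
  proof -
    have "2 * real \<tau> = 4 * X * (1 / a)" using tX by simp
    then have "ln (2 * real \<tau>) = ln (4 * X) + ln (1 / a)"
      using X0 a by (simp only: ln_mult) simp_all
    also have "ln (4 * X) = ln 4 + ln X" using X0 by (simp add: ln_mult)
    finally have "ln (2 * real \<tau>) = ln 4 + ln X + ln (1 / a)" .
    also have "ln (1 / a) = L - ln 2" unfolding L_def using a by (simp add: ln_div)
    finally have "ln (2 * real \<tau>) = ln 4 + ln X + L - ln 2" by simp
    moreover have "ln X \<le> X / 2" by (rule ln_le_half[OF X0])
    moreover have "ln (2::real) \<ge> 0" by simp
    ultimately show ?thesis using X4 X0 by linarith
  qed
  define m where "m = \<tau> - 1"
  have m: "real m = real \<tau> - 1" using tau_ge by (simp add: m_def)
  have rho: "(1 - a)^m \<le> exp (- a * real m)"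
  proof -
    have "(1 - a)^m \<le> exp (- a)^m"
      by (rule power_mono) (use a exp_ge_add_one_self[of "-a"] in auto)
    also have "\<dots> = exp (- a * real m)" by (simp add: exp_of_nat_mult[symmetric] mult.commute)
    finally show ?thesis .
  qed
  have am: "a * real m = 2 * X - a" unfolding X_def m by (simp add: algebra_simps)
  have "2 * real \<tau> * (1 - a)^m \<le> 2 * real \<tau> * exp (- a * real m)"
    using rho by (rule mult_left_mono) auto
  also have "\<dots> = exp (ln (2 * real \<tau>)) * exp (- a * real m)" using tau2 by simp
  also have "\<dots> = exp (ln (2 * real \<tau>) - a * real m)"
    by (simp add: exp_add[symmetric])
  also have "\<dots> \<le> exp (ln (sqrt \<delta>))"
    using ln2t Xa am by simp
  also have "\<dots> = sqrt \<delta>" using \<delta> by simp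
  finally have main: "2 * real \<tau> * (1 - a)^m \<le> sqrt \<delta>" .
  have pos: "0 \<le> 2 * real \<tau> * (1 - a)^m" using a by simp
  have "(3 + 2 * (real \<tau>)^2) * ((1 - a)^m)^2 \<le> (2 * real \<tau>)^2 * ((1 - a)^m)^2"
  proof (rule mult_right_mono)
    have "real \<tau> * real \<tau> \<ge> 2 * 2" by (rule mult_mono) (use tau2 in auto)
    then show "3 + 2 * (real \<tau>)^2 \<le> (2 * real \<tau>)^2"
      by (simp add: power2_eq_square)
  qed simp
  also have "\<dots> = (2 * real \<tau> * (1 - a)^m)^2" by (simp add: power_mult_distrib)
  also have "\<dots> \<le> (sqrt \<delta>)^2" by (rule power_mono[OF main pos])
  also have "\<dots> = \<delta>" using \<delta> by simp
  finally show ?thesis using tau_ge by (simp add: m_def)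
qed

theorem lemma2:
  fixes Q :: "real^'n^'n" and lam :: "nat \<Rightarrow> real"
    and \<delta> \<gamma> :: real and \<tau> :: nat
  assumes n2: "CARD('n) \<ge> 2"
    and sym: "transpose Q = Q"
    and ds: "doubly_stochastic Q"
    and eig: "charpoly Q = (\<Prod>i<CARD('n). [:- lam i, 1:])"
    and l1: "lam 0 = 1" and l12: "lam 0 > lam 1"
    and lsorted: "\<And>i j. 1 \<le> i \<Longrightarrow> i \<le> j \<Longrightarrow> j < CARD('n) \<Longrightarrow> lam j \<le> lam i"
    and lmin: "lam (CARD('n) - 1) > -1"
    and \<delta>: "0 < \<delta>" "\<delta> < 1"
    and \<gamma>: "0 < \<gamma>" "\<gamma> < 1/4"
    and \<tau>: "real \<tau> \<ge> of_int \<lceil>2 / (\<gamma> * (1 - lam 1)) *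
               max (4 * ln (2 / (\<gamma> * (1 - lam 1))))
                   (\<gamma> * (1 - lam 1) - ln (sqrt \<delta> / 4))\<rceil>"
  shows "(onorm (\<lambda>x. matpow (Jgamma Q \<gamma> :: real^(3 \<times> ('n \<times> 'd::finite))^(3 \<times> ('n \<times> 'd))) \<tau> *v x))\<^sup>2 \<le> \<delta>
         \<and> \<delta> < 1"
proof -
  define a where "a = \<gamma> * (1 - lam 1)"
  have lt1: "lam 1 < 1" using l12 l1 by simp
  have gtm1: "lam 1 > -1"
    using lsorted[of 1 "CARD('n) - 1"] n2 lmin by force
  have a0: "0 < a" unfolding a_def using \<gamma> lt1 by simp
  have a1: "a < 1/2"
  proof -
    have "\<gamma> * (1 - lam 1) < (1/4) * 2"
      by (rule mult_strict_mono) (use \<gamma> gtm1 lt1 in auto)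
    then show ?thesis unfolding a_def by simp
  qed
  have num: "\<tau> \<ge> 2 \<and> (3 + 2 * (real \<tau>)^2) * ((1 - a)^(\<tau> - 1))^2 \<le> \<delta>"
    by (rule numeric[OF a0 a1 \<delta>]) (use \<tau> in \<open>simp add: a_def\<close>)
  define k where "k = \<tau> - 1"
  have tk: "\<tau> = Suc k" using num by (simp add: k_def)
  have Mn: "norm (((Ibar :: real^('n \<times> 'd)^('n \<times> 'd)) - \<gamma> *\<^sub>R Qprime Q) *v v) \<le> (1 - a) * norm v" for v
    unfolding a_def
    apply (rule M_norm[OF n2 sym ds eig l1 l12])
    using lsorted \<gamma> gtm1 by auto
  have bnd: "norm (matpow (Jgamma Q \<gamma> :: real^(3 \<times> ('n \<times> 'd))^(3 \<times> ('n \<times> 'd))) \<tau> *v w) \<le> sqrt \<delta> * norm w" for w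
  proof -
    have "(norm (matpow (Jgamma Q \<gamma> :: real^(3 \<times> ('n \<times> 'd))^(3 \<times> ('n \<times> 'd))) \<tau> *v w))^2
        \<le> (3 + 2 * (real (Suc k))^2) * ((1 - a)^k)^2 * (norm w)^2"
      unfolding tk by (rule J_bound[OF ds Mn]) (use a0 a1 in auto)
    also have "\<dots> \<le> \<delta> * (norm w)^2"
      using num by (intro mult_right_mono) (auto simp: tk)
    also have "\<dots> = (sqrt \<delta> * norm w)^2" using \<delta> by (simp add: power_mult_distrib)
    finally show ?thesis
      by (rule power2_le_imp_le) (use \<delta> in simp)
  qed
  have o1: "onorm (\<lambda>x. matpow (Jgamma Q \<gamma> :: real^(3 \<times> ('n \<times> 'd))^(3 \<times> ('n \<times> 'd))) \<tau> *v x) \<le> sqrt \<delta>"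
    by (rule onorm_le) (rule bnd)
  have o0: "0 \<le> onorm (\<lambda>x. matpow (Jgamma Q \<gamma> :: real^(3 \<times> ('n \<times> 'd))^(3 \<times> ('n \<times> 'd))) \<tau> *v x)"
    by (rule onorm_pos_le) simp
  have "(onorm (\<lambda>x. matpow (Jgamma Q \<gamma> :: real^(3 \<times> ('n \<times> 'd))^(3 \<times> ('n \<times> 'd))) \<tau> *v x))\<^sup>2 \<le> (sqrt \<delta>)^2"
    by (rule power_mono[OF o1 o0])
  then show ?thesis using \<delta> by simp
qed

end
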